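(* Let $\eta(y)=\sum_{k=0}^\infty M_k y^{(k)}$ be a finite order differential operator on $\mathcal{P}_c$ (i.e. $M_k\equiv 0$ for all $k>r$ for some $r\in\mathbb{N}$), let $p=(p_n)_{n\in\mathbb{N}_0}$ be a polynomial sequence and $d\in\widetilde{D}$ with $\eta p_n=d_np_n$ for all $n\in\mathbb{N}_0$. Let $d'\in\widetilde{D}$ with $d'\neq d$ and $d'_k=d_k$ for all but finitely many $k$. Then any formal differential operator $\widetilde{\eta}$ with $\widetilde{\eta}p_n=d'_np_n$ for all $n\in\mathbb{N}_0$ is of infinite order, i.e. it is not a finite order differential operator.
   Context: $\mathcal{P}_c$ is the space of polynomials in one real variable with complex coefficients. A formal differential operator is a map $\mathcal{P}_c\to\mathcal{P}_c$, $y\mapsto\sum_{k=0}^\infty M_k y^{(k)}$ (a finite sum on each polynomial), where $M_k$ are complex polynomials with $\deg M_k\le k$ and $M_0$ constant. A polynomial sequence (PS) is $p=(p_n)_{n\in\mathbb{N}_0}$ with $p_0\equiv1$ and $\deg p_n=n$. $\widetilde{D}$ is the set of non-constant sequences $(d_n)_{n\in\mathbb{N}_0}$ of non-zero complex numbers. *)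

theory Defs
  imports "HOL-Computational_Algebra.Polynomial"
begin

definition formal_diff_op :: "(nat \<Rightarrow> complex poly) \<Rightarrow> bool" where
  "formal_diff_op M \<longleftrightarrow> (\<forall>k. degree (M k) \<le> k)"

text \<open>Action on a polynomial: the sum over k of M k times the k-th derivative
  (finite, since derivatives of order > degree y vanish).\<close>
definition apply_fdo :: "(nat \<Rightarrow> complex poly) \<Rightarrow> complex poly \<Rightarrow> complex poly" where
  "apply_fdo M y = (\<Sum>k\<le>degree y. M k * (pderiv ^^ k) y)"

definition finite_order :: "(nat \<Rightarrow> complex poly) \<Rightarrow> bool" where
  "finite_order M \<longleftrightarrow> (\<exists>r. \<forall>k>r. M k = 0)"

definition poly_seq :: "(nat \<Rightarrow> complex poly) \<Rightarrow> bool" where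
  "poly_seq p \<longleftrightarrow> p 0 = 1 \<and> (\<forall>n. degree (p n) = n)"

definition Dtilde :: "(nat \<Rightarrow> complex) set" where
  "Dtilde = {d. (\<forall>n. d n \<noteq> 0) \<and> (\<exists>m n. d m \<noteq> d n)}"

end

theory Submission
  imports Defs
begin

lemma pderiv_iter_coeff:
  "coeff ((pderiv ^^ k) y) j = pochhammer (of_nat (Suc j)) k * coeff y (j + k)"
proof (induction k arbitrary: j)
  case 0 then show ?case by simp
next
  case (Suc k)
  have "coeff ((pderiv ^^ Suc k) y) j = coeff (pderiv ((pderiv ^^ k) y)) j" by simp
  also have "\<dots> = of_nat (Suc j) * coeff ((pderiv ^^ k) y) (Suc j)" by (rule coeff_pderiv)
  also have "\<dots> = of_nat (Suc j) * (pochhammer (of_nat (Suc (Suc j))) k * coeff y (Suc j + k))"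
    using Suc by simp
  also have "\<dots> = pochhammer (of_nat (Suc j)) (Suc k) * coeff y (j + Suc k)"
    by (simp add: pochhammer_rec algebra_simps)
  finally show ?case .
qed

lemma apply_fdo_diff:
  "apply_fdo (\<lambda>k. A k - B k) y = apply_fdo A y - apply_fdo B y"
  unfolding apply_fdo_def by (simp add: sum_subtractf left_diff_distrib)

lemma apply_fdo_zero:
  assumes "\<And>k. N k = 0" shows "apply_fdo N y = 0"
  unfolding apply_fdo_def using assms by simp

lemma main_coeff:
  fixes N :: "nat \<Rightarrow> complex poly"
  assumes l0: "\<And>k j. coeff (N k) j \<noteq> 0 \<Longrightarrow> l0 + j \<le> k"
    and r: "\<And>k. k > r \<Longrightarrow> N k = 0"
    and deg: "degree y = n" and rn: "r \<le> n" and l0n: "l0 \<le> n"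
  shows "coeff (apply_fdo N y) (n - l0) =
    coeff y n * (\<Sum>k\<le>r. coeff (N k) (k - l0) * pochhammer (of_nat (n - k + 1)) k)"
proof -
  have trm: "coeff (N k) i * coeff ((pderiv ^^ k) y) (n - l0 - i) =
      (if i = k - l0 then coeff (N k) (k - l0) * pochhammer (of_nat (n - k + 1)) k * coeff y n else 0)"
    if "i \<le> n - l0" "k \<le> n" for i k
  proof (cases "i = k - l0")
    case True
    show ?thesis
    proof (cases "l0 \<le> k")
      case True
      with \<open>i = k - l0\<close> that have "n - l0 - i = n - k" "n - k + k = n" "Suc (n - k) = n - k + 1" by auto
      then show ?thesis using \<open>i = k - l0\<close> by (simp add: pderiv_iter_coeff)
    next
      case False
      then have "coeff (N k) (k - l0) = 0" using l0[of k "k - l0"] by fastforce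
      then show ?thesis using \<open>i = k - l0\<close> by simp
    qed
  next
    case False
    show ?thesis
    proof (cases "coeff (N k) i = 0")
      case True then show ?thesis using False by simp
    next
      case nz: False
      have "l0 + i \<le> k" using l0[OF nz] .
      with False have "l0 + i < k" by auto
      then have "n - l0 - i + k > n" using that by auto
      then have "coeff y (n - l0 - i + k) = 0" using deg by (simp add: coeff_eq_0)
      then show ?thesis using False by (simp add: pderiv_iter_coeff add.commute)
    qed
  qed
  have "coeff (apply_fdo N y) (n - l0) =
      (\<Sum>k\<le>n. \<Sum>i\<le>n - l0. coeff (N k) i * coeff ((pderiv ^^ k) y) (n - l0 - i))"
    unfolding apply_fdo_def deg by (simp add: coeff_sum coeff_mult)
  also have "\<dots> = (\<Sum>k\<le>n. \<Sum>i\<le>n - l0. (if i = k - l0 then coeff (N k) (k - l0) * pochhammer (of_nat (n - k + 1)) k * coeff y n else 0))"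
    by (intro sum.cong refl trm) auto
  also have "\<dots> = (\<Sum>k\<le>n. coeff (N k) (k - l0) * pochhammer (of_nat (n - k + 1)) k * coeff y n)"
  proof (intro sum.cong refl)
    fix k assume "k \<in> {..n}"
    then have "k - l0 \<in> {..n - l0}" by auto
    then show "(\<Sum>i\<le>n - l0. (if i = k - l0 then coeff (N k) (k - l0) * pochhammer (of_nat (n - k + 1)) k * coeff y n else 0))
       = coeff (N k) (k - l0) * pochhammer (of_nat (n - k + 1)) k * coeff y n"
      by (simp add: sum.delta')
  qed
  also have "\<dots> = (\<Sum>k\<le>r. coeff (N k) (k - l0) * pochhammer (of_nat (n - k + 1)) k * coeff y n)"
    by (rule sum.mono_neutral_right) (use rn r in auto)
  also have "\<dots> = coeff y n * (\<Sum>k\<le>r. coeff (N k) (k - l0) * pochhammer (of_nat (n - k + 1)) k)"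
    by (simp add: sum_distrib_left algebra_simps)
  finally show ?thesis .
qed

definition Qk :: "nat \<Rightarrow> complex poly" where
  "Qk k = (\<Prod>i\<in>{0..<k}. [:of_nat i + 1 - of_nat k, 1:])"

lemma Qk_degree: "degree (Qk k) = k"
  unfolding Qk_def by (subst degree_prod_eq_sum_degree) auto

lemma Qk_lead: "coeff (Qk k) k = 1"
proof -
  have "lead_coeff (Qk k) = 1" unfolding Qk_def lead_coeff_prod by simp
  then show ?thesis using Qk_degree[of k] by simp
qed

lemma Qk_poly:
  assumes "k \<le> n"
  shows "poly (Qk k) (of_nat n) = pochhammer (of_nat (n - k + 1)) k"
  unfolding Qk_def poly_prod pochhammer_prod using assms
  by (intro prod.cong refl) (simp add: of_nat_diff algebra_simps)

lemma finite_zeros: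
  fixes b :: "nat \<Rightarrow> complex"
  assumes "\<exists>k\<le>r. b k \<noteq> 0"
  shows "finite {n. r \<le> n \<and> (\<Sum>k\<le>r. b k * pochhammer (of_nat (n - k + 1)) k) = 0}"
proof -
  define Q where "Q = (\<Sum>k\<le>r. smult (b k) (Qk k))"
  define K where "K = Max {k. k \<le> r \<and> b k \<noteq> 0}"
  have fin: "finite {k. k \<le> r \<and> b k \<noteq> 0}" by simp
  have ne: "{k. k \<le> r \<and> b k \<noteq> 0} \<noteq> {}" using assms by auto
  have K: "K \<le> r" "b K \<noteq> 0" using Max_in[OF fin ne] unfolding K_def by auto
  have Kmax: "b k = 0" if "k \<le> r" "k > K" for k
    using Max_ge[OF fin, of k] that unfolding K_def by fastforce
  have "coeff Q K = (\<Sum>k\<le>r. b k * coeff (Qk k) K)"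
    unfolding Q_def by (simp add: coeff_sum)
  also have "\<dots> = (\<Sum>k\<le>r. if k = K then b K else 0)"
  proof (intro sum.cong refl)
    fix k assume "k \<in> {..r}"
    then show "b k * coeff (Qk k) K = (if k = K then b K else 0)"
    proof (cases "k = K")
      case True then show ?thesis by (simp add: Qk_lead)
    next
      case False
      show ?thesis
      proof (cases "k < K")
        case True then have "coeff (Qk k) K = 0" by (simp add: coeff_eq_0 Qk_degree)
        then show ?thesis using False by simp
      next
        case False2: False
        then show ?thesis using False Kmax \<open>k \<in> {..r}\<close> by auto
      qed
    qed
  qed
  also have "\<dots> = b K" using K by simp
  finally have "Q \<noteq> 0" using K by auto
  then have "finite {x. poly Q x = 0}" by (rule poly_roots_finite)
  then have "finite (of_nat -` {x. poly Q x = 0} :: nat set)"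
    by (rule finite_vimageI) (simp add: inj_on_def)
  moreover have "{n. r \<le> n \<and> (\<Sum>k\<le>r. b k * pochhammer (of_nat (n - k + 1)) k) = 0}
      \<subseteq> of_nat -` {x. poly Q x = 0}"
  proof
    fix n assume n: "n \<in> {n. r \<le> n \<and> (\<Sum>k\<le>r. b k * pochhammer (of_nat (n - k + 1)) k) = 0}"
    have "poly Q (of_nat n) = (\<Sum>k\<le>r. b k * poly (Qk k) (of_nat n))"
      unfolding Q_def by (simp add: poly_sum)
    also have "\<dots> = (\<Sum>k\<le>r. b k * pochhammer (of_nat (n - k + 1)) k)"
      using n by (intro sum.cong refl) (simp add: Qk_poly)
    also have "\<dots> = 0" using n by blast
    finally show "n \<in> of_nat -` {x. poly Q x = 0}" by simp
  qed
  ultimately show ?thesis by (rule finite_subset[rotated])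
qed


lemma poly_seq_nz: "poly_seq p \<Longrightarrow> p n \<noteq> 0"
  unfolding poly_seq_def by (cases n) (auto, metis degree_0 nat.simps(3))

theorem proposition2:
  fixes M M' :: "nat \<Rightarrow> complex poly" and p :: "nat \<Rightarrow> complex poly"
    and d d' :: "nat \<Rightarrow> complex"
  assumes "formal_diff_op M" and "finite_order M"
    and "poly_seq p"
    and "d \<in> Dtilde"
    and "\<And>n. apply_fdo M (p n) = smult (d n) (p n)"
    and "d' \<in> Dtilde" and "d' \<noteq> d" and "finite {k. d' k \<noteq> d k}"
    and "formal_diff_op M'"
    and "\<And>n. apply_fdo M' (p n) = smult (d' n) (p n)"
  shows "\<not> finite_order M'"
proof
  assume fo': "finite_order M'"
  obtain r1 where r1: "\<And>k. k > r1 \<Longrightarrow> M k = 0" using assms(2) unfolding finite_order_def by blast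
  obtain r2 where r2: "\<And>k. k > r2 \<Longrightarrow> M' k = 0" using fo' unfolding finite_order_def by blast
  define r where "r = max r1 r2"
  define N where "N k = M' k - M k" for k
  have Nr: "N k = 0" if "k > r" for k using r1 r2 that unfolding N_def r_def by simp
  have Napp: "apply_fdo N (p n) = smult (d' n - d n) (p n)" for n
  proof -
    have "apply_fdo N (p n) = apply_fdo M' (p n) - apply_fdo M (p n)"
      unfolding N_def by (rule apply_fdo_diff)
    then show ?thesis using assms(5,10) by (simp add: smult_diff_left)
  qed
  have Ndeg: "degree (N k) \<le> k" for k
    using assms(1,9) unfolding formal_diff_op_def N_def
    by (meson degree_diff_le)
  have pnz: "p n \<noteq> 0" for n using poly_seq_nz[OF assms(3)] .
  have Nnz: "\<exists>k j. coeff (N k) j \<noteq> 0"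
  proof (rule ccontr)
    assume "\<not> ?thesis"
    then have "N k = 0" for k by (auto intro: poly_eqI)
    then have "apply_fdo N y = 0" for y by (rule apply_fdo_zero)
    then have "d' n = d n" for n using Napp[of n] pnz[of n] by simp
    then show False using assms(7) by auto
  qed
  define l0 where "l0 = (LEAST l. \<exists>k j. coeff (N k) j \<noteq> 0 \<and> l = k - j)"
  have jk: "j \<le> k" if "coeff (N k) j \<noteq> 0" for k j
    using le_degree[OF that] Ndeg[of k] by simp
  have l0prop: "l0 + j \<le> k" if "coeff (N k) j \<noteq> 0" for k j
  proof -
    have "l0 \<le> k - j" unfolding l0_def by (rule Least_le) (use that in blast)
    then show ?thesis using jk[OF that] by simp
  qed
  obtain k0 j0 where kj0: "coeff (N k0) j0 \<noteq> 0" "l0 = k0 - j0"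
    using LeastI_ex[of "\<lambda>l. \<exists>k j. coeff (N k) j \<noteq> 0 \<and> l = k - j"] Nnz unfolding l0_def by blast
  have "k0 \<le> r" using kj0(1) Nr by (metis coeff_0 not_le_imp_less)
  have j0: "j0 = k0 - l0" using kj0 jk[OF kj0(1)] by simp
  define b where "b k = coeff (N k) (k - l0)" for k
  have bex: "\<exists>k\<le>r. b k \<noteq> 0" using \<open>k0 \<le> r\<close> kj0(1) j0 unfolding b_def by auto
  have l0r: "l0 \<le> r" using \<open>k0 \<le> r\<close> kj0 by simp
  have fin: "finite ({n. r \<le> n \<and> (\<Sum>k\<le>r. b k * pochhammer (of_nat (n - k + 1)) k) = 0}
       \<union> {k. d' k \<noteq> d k} \<union> {..r})"
    using finite_zeros[OF bex] assms(8) by simp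
  obtain n where n: "n \<notin> {n. r \<le> n \<and> (\<Sum>k\<le>r. b k * pochhammer (of_nat (n - k + 1)) k) = 0}
       \<union> {k. d' k \<noteq> d k} \<union> {..r}"
    using ex_new_if_finite[OF infinite_UNIV_nat fin] by blast
  then have nr: "r < n" and dn: "d' n = d n"
    and S: "(\<Sum>k\<le>r. b k * pochhammer (of_nat (n - k + 1)) k) \<noteq> 0" by auto
  have degp: "degree (p n) = n" using assms(3) unfolding poly_seq_def by blast
  have "coeff (apply_fdo N (p n)) (n - l0) =
      coeff (p n) n * (\<Sum>k\<le>r. coeff (N k) (k - l0) * pochhammer (of_nat (n - k + 1)) k)"
    by (rule main_coeff[OF l0prop Nr degp]) (use nr l0r in auto)
  moreover have "coeff (p n) n \<noteq> 0" using pnz[of n] degp by (metis leading_coeff_0_iff)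
  ultimately have "coeff (apply_fdo N (p n)) (n - l0) \<noteq> 0" using S unfolding b_def by simp
  moreover have "apply_fdo N (p n) = 0" using Napp[of n] dn by simp
  ultimately show False by simp
qed

end
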